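(* Let $\Gamma=(V,E)$ be a layered graph with unique minimal vertex $*$. Then $A(\Gamma)\cong T(V_+)/R_V$, where $R_V$ is the two-sided ideal of $T(V_+)$ generated by $\{\tilde e(\pi,i)-\tilde e(\pi',i): \pi\approx\pi',\ 0\le i\le \|\pi\|\}$.
   Context: A layered graph is a finite directed graph $\Gamma=(V,E)$ with $V=\bigsqcup_{i=0}^{N}V_i$ such that every edge $(v,w)\in E$ with $v\in V_i$ has $w\in V_{i-1}$. Write $V_+=\bigsqcup_{i\ge1}V_i$ and $S(v)=\{w:(v,w)\in E\}$; it is assumed that $S(v)\neq\emptyset$ for every $v\in V_+$. $\Gamma$ has unique minimal vertex $*$ if $V_0=\{*\}$. A path is a sequence of edges $\pi=(e_1,\dots,e_m)$ with head of $e_i$ = tail of $e_{i+1}$, of length $\|\pi\|=m$; $\pi\approx\pi'$ means same length, same start and same end. Fix a field $\mathbb F$; $T(X)$ is the free associative algebra on $X$. For a path $\pi=(e_1,\dots,e_m)$ define $e(\pi,i)\in T(E)$ by $(t-e_1)(t-e_2)\cdots(t-e_m)=\sum_{i}e(\pi,i)t^i$ in $T(E)[t]$ with $t$ a central indeterminate. The universal labeling algebra is $A(\Gamma)=T(E)/R$, where $R$ is generated by $e(\pi,i)-e(\pi',i)$ for all $\pi\approx\pi'$, $0\le i\le\|\pi\|$. Let $\phi'':T(E)\to T(V_+)$ be the algebra map with $\phi''((v,w))=v-w$ if $w\neq *$ and $\phi''((v,w))=v$ if $w=*$, and set $\tilde e(\pi,i)=\phi''(e(\pi,i))$. *)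

theory Defs
  imports "HOL-Algebra.QuotRing"
begin

text \<open>Elements of T(X) are finitely supported functions from words (lists over X)
  to the field; multiplication is concatenation-convolution.\<close>

definition free_alg :: "'x set \<Rightarrow> ('x list \<Rightarrow> 'k::field) ring" where
  "free_alg X = \<lparr>carrier = {f. finite {w. f w \<noteq> 0} \<and> (\<forall>w. f w \<noteq> 0 \<longrightarrow> set w \<subseteq> X)},
     mult = (\<lambda>f g w. \<Sum>k\<le>length w. f (take k w) * g (drop k w)),
     one = (\<lambda>w. if w = [] then 1 else 0),
     zero = (\<lambda>w. 0),
     add = (\<lambda>f g w. f w + g w)\<rparr>"

definition fa_gen :: "'x \<Rightarrow> ('x list \<Rightarrow> 'k::field)" where
  "fa_gen x = (\<lambda>w. if w = [x] then 1 else 0)"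

definition fa_scalar :: "'k::field \<Rightarrow> ('x list \<Rightarrow> 'k)" where
  "fa_scalar c = (\<lambda>w. if w = [] then c else 0)"

definition fa_mult :: "('x list \<Rightarrow> 'k::field) \<Rightarrow> ('x list \<Rightarrow> 'k) \<Rightarrow> ('x list \<Rightarrow> 'k)" where
  "fa_mult f g = (\<lambda>w. \<Sum>k\<le>length w. f (take k w) * g (drop k w))"

definition fa_diff :: "('x list \<Rightarrow> 'k::field) \<Rightarrow> ('x list \<Rightarrow> 'k) \<Rightarrow> ('x list \<Rightarrow> 'k)" where
  "fa_diff f g = (\<lambda>w. f w - g w)"

text \<open>Algebra map T(X) \<rightarrow> T(Y) determined by the images of the generators.\<close>
definition fa_lift :: "('x \<Rightarrow> ('y list \<Rightarrow> 'k::field)) \<Rightarrow> ('x list \<Rightarrow> 'k) \<Rightarrow> ('y list \<Rightarrow> 'k)" where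
  "fa_lift g p = (\<lambda>u. \<Sum>w\<in>{w. p w \<noteq> 0}. p w * foldr fa_mult (map g w) (fa_scalar 1) u)"

text \<open>Layer function lvl: v \<in> V_i iff lvl v = i.\<close>
definition layered_graph :: "'v set \<Rightarrow> ('v \<times> 'v) set \<Rightarrow> ('v \<Rightarrow> nat) \<Rightarrow> bool" where
  "layered_graph V E lvl \<longleftrightarrow> finite V \<and> E \<subseteq> V \<times> V \<and>
     (\<forall>(v,w)\<in>E. lvl v \<ge> 1 \<and> lvl w = lvl v - 1) \<and>
     (\<forall>v\<in>V. lvl v \<ge> 1 \<longrightarrow> (\<exists>w. (v,w) \<in> E))"

definition unique_min :: "'v set \<Rightarrow> ('v \<Rightarrow> nat) \<Rightarrow> 'v \<Rightarrow> bool" where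
  "unique_min V lvl s \<longleftrightarrow> {v\<in>V. lvl v = 0} = {s}"

definition Vplus :: "'v set \<Rightarrow> ('v \<Rightarrow> nat) \<Rightarrow> 'v set" where
  "Vplus V lvl = {v\<in>V. lvl v \<ge> 1}"

definition is_path :: "('v \<times> 'v) set \<Rightarrow> ('v \<times> 'v) list \<Rightarrow> bool" where
  "is_path E p \<longleftrightarrow> p \<noteq> [] \<and> set p \<subseteq> E \<and>
     (\<forall>j. Suc j < length p \<longrightarrow> snd (p ! j) = fst (p ! Suc j))"

definition path_equiv :: "('v \<times> 'v) list \<Rightarrow> ('v \<times> 'v) list \<Rightarrow> bool" where
  "path_equiv p q \<longleftrightarrow> length p = length q \<and> fst (hd p) = fst (hd q) \<and> snd (last p) = snd (last q)"

text \<open>e(pi,i): coefficient of t^i in (t - e_1)...(t - e_m) in T(E)[t], t central.\<close>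
fun ecoef :: "('v \<times> 'v) list \<Rightarrow> nat \<Rightarrow> (('v \<times> 'v) list \<Rightarrow> 'k::field)" where
  "ecoef [] i = (if i = 0 then fa_scalar 1 else (\<lambda>w. 0))"
| "ecoef (e # p) i = fa_diff (if i = 0 then (\<lambda>w. 0) else ecoef p (i - 1)) (fa_mult (fa_gen e) (ecoef p i))"

definition phi2_gen :: "'v \<Rightarrow> ('v \<times> 'v) \<Rightarrow> ('v list \<Rightarrow> 'k::field)" where
  "phi2_gen s e = (if snd e = s then fa_gen (fst e) else fa_diff (fa_gen (fst e)) (fa_gen (snd e)))"

definition etilde :: "'v \<Rightarrow> ('v \<times> 'v) list \<Rightarrow> nat \<Rightarrow> ('v list \<Rightarrow> 'k::field)" where
  "etilde s p i = fa_lift (phi2_gen s) (ecoef p i)"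

definition R_E :: "('v \<times> 'v) set \<Rightarrow> (('v \<times> 'v) list \<Rightarrow> 'k::field) set" where
  "R_E E = genideal (free_alg E)
     {fa_diff (ecoef p i) (ecoef q i) | p q i. is_path E p \<and> is_path E q \<and> path_equiv p q \<and> i \<le> length p}"

definition R_V :: "'v set \<Rightarrow> ('v \<times> 'v) set \<Rightarrow> ('v \<Rightarrow> nat) \<Rightarrow> 'v \<Rightarrow> ('v list \<Rightarrow> 'k::field) set" where
  "R_V V E lvl s = genideal (free_alg (Vplus V lvl))
     {fa_diff (etilde s p i) (etilde s q i) | p q i. is_path E p \<and> is_path E q \<and> path_equiv p q \<and> i \<le> length p}"

definition labeling_alg :: "('v \<times> 'v) set \<Rightarrow> (('v \<times> 'v) list \<Rightarrow> 'k::field) set ring" where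
  "labeling_alg E = free_alg E Quot R_E E"

end

theory Submission
  imports Defs "HOL-Library.Function_Algebras"
begin

definition supp :: "('a \<Rightarrow> 'k::zero) \<Rightarrow> 'a set" where "supp f = {w. f w \<noteq> 0}"
definition sc :: "'k::field \<Rightarrow> ('x list \<Rightarrow> 'k) \<Rightarrow> ('x list \<Rightarrow> 'k)" where "sc c f = (\<lambda>w. c * f w)"
definition dl :: "'x list \<Rightarrow> ('x list \<Rightarrow> 'k::field)" where "dl u = (\<lambda>x. if x = u then 1 else 0)"

lemma sum_fun_apply: "(\<Sum>i\<in>I. F i) x = (\<Sum>i\<in>I. F i x)"
  by (induction I rule: infinite_finite_induct) auto

lemma fa_mult_add_left: "fa_mult (f + g) h = fa_mult f h + fa_mult g h"
  by (auto simp: fa_mult_def fun_eq_iff distrib_right sum.distrib)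
lemma fa_mult_add_right: "fa_mult h (f + g) = fa_mult h f + fa_mult h g"
  by (auto simp: fa_mult_def fun_eq_iff distrib_left sum.distrib)
lemma fa_mult_zero_left[simp]: "fa_mult 0 h = 0"
  by (auto simp: fa_mult_def fun_eq_iff)
lemma fa_mult_zero_right[simp]: "fa_mult h 0 = 0"
  by (auto simp: fa_mult_def fun_eq_iff)
lemma fa_mult_sum_left: "fa_mult (\<Sum>i\<in>I. F i) h = (\<Sum>i\<in>I. fa_mult (F i) h)"
  unfolding fa_mult_def fun_eq_iff sum_fun_apply sum_distrib_right
  by (auto intro: sum.swap)
lemma fa_mult_sum_right: "fa_mult h (\<Sum>i\<in>I. F i) = (\<Sum>i\<in>I. fa_mult h (F i))"
  unfolding fa_mult_def fun_eq_iff sum_fun_apply sum_distrib_left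
  by (auto intro: sum.swap)
lemma fa_mult_sc_left: "fa_mult (sc c f) g = sc c (fa_mult f g)"
  by (auto simp: fa_mult_def sc_def fun_eq_iff sum_distrib_left mult.assoc)
lemma fa_mult_sc_right: "fa_mult f (sc c g) = sc c (fa_mult f g)"
  by (auto simp: fa_mult_def sc_def fun_eq_iff sum_distrib_left mult.left_commute)
lemma fa_mult_neg_left: "fa_mult (- f) g = - fa_mult f g"
  by (auto simp: fa_mult_def fun_eq_iff sum_negf)
lemma fa_mult_neg_right: "fa_mult f (- g) = - fa_mult f g"
proof (rule ext)
  fix w
  show "fa_mult f (- g) w = (- fa_mult f g) w"
    unfolding fa_mult_def by (simp add: sum_negf)
qed
lemma fa_mult_diff_left: "fa_mult (f - g) h = fa_mult f h - fa_mult g h"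
proof (rule ext)
  fix w
  show "fa_mult (f - g) h w = (fa_mult f h - fa_mult g h) w"
    unfolding fa_mult_def by (simp add: left_diff_distrib sum_subtractf)
qed
lemma fa_mult_diff_right: "fa_mult h (f - g) = fa_mult h f - fa_mult h g"
proof (rule ext)
  fix w
  show "fa_mult h (f - g) w = (fa_mult h f - fa_mult h g) w"
    unfolding fa_mult_def by (simp add: right_diff_distrib sum_subtractf)
qed

lemma fa_mult_assoc: "fa_mult (fa_mult f g) h = fa_mult f (fa_mult g h)"
proof (rule ext)
  fix w :: "'a list"
  define n where "n = length w"
  define G where "G = (\<lambda>i j. f (take i w) * g (take j (drop i w)) * h (drop (i+j) w))"
  have "fa_mult (fa_mult f g) h w = (\<Sum>k\<le>n. \<Sum>i\<le>k. G i (k - i))"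
    unfolding fa_mult_def n_def G_def sum_distrib_right
    by (intro sum.cong refl) (auto simp: min_def take_drop)
  also have "\<dots> = (\<Sum>(i,j)\<in>{(i,j). i+j \<le> n}. G i j)"
    by (rule sum.triangle_reindex_eq[symmetric])
  also have "{(i,j). i+j \<le> n} = Sigma {..n} (\<lambda>i. {..n-i})" by auto
  also have "(\<Sum>(i,j)\<in>Sigma {..n} (\<lambda>i. {..n-i}). G i j) = (\<Sum>i\<le>n. \<Sum>j\<le>n-i. G i j)"
    by (rule sum.Sigma[symmetric]) auto
  also have "\<dots> = fa_mult f (fa_mult g h) w"
    unfolding fa_mult_def n_def G_def sum_distrib_left
    by (intro sum.cong refl) (auto simp: mult.assoc add.commute)
  finally show "fa_mult (fa_mult f g) h w = fa_mult f (fa_mult g h) w" .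
qed

lemma fa_mult_one_left[simp]: "fa_mult (fa_scalar 1) f = f"
proof (rule ext)
  fix w :: "'a list"
  have "fa_mult (fa_scalar 1) f w = (\<Sum>k\<le>length w. if k = 0 then f w else 0)"
    unfolding fa_mult_def fa_scalar_def by (intro sum.cong refl) auto
  then show "fa_mult (fa_scalar 1) f w = f w" by simp
qed

lemma fa_mult_one_right[simp]: "fa_mult f (fa_scalar 1) = f"
proof (rule ext)
  fix w :: "'a list"
  have "fa_mult f (fa_scalar 1) w = (\<Sum>k\<le>length w. if k = length w then f w else 0)"
    unfolding fa_mult_def fa_scalar_def by (intro sum.cong refl) auto
  then show "fa_mult f (fa_scalar 1) w = f w" by simp
qed

lemma take_drop_iff: "k \<le> length w \<Longrightarrow> (take k w = u \<and> drop k w = v) \<longleftrightarrow> (k = length u \<and> w = u @ v)"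
proof
  assume a: "take k w = u \<and> drop k w = v" and k: "k \<le> length w"
  then have "w = u @ v" by (metis append_take_drop_id)
  moreover have "k = length u" using a k by auto
  ultimately show "k = length u \<and> w = u @ v" by simp
qed auto

lemma fa_mult_dl: "fa_mult (dl u) (dl v) = dl (u @ v)"
proof (rule ext)
  fix w :: "'a list"
  have "fa_mult (dl u) (dl v) w = (\<Sum>k\<le>length w. if k = length u \<and> w = u @ v then 1 else 0)"
    unfolding fa_mult_def dl_def
    by (intro sum.cong refl) (auto simp: take_drop_iff[symmetric])
  also have "\<dots> = dl (u @ v) w" unfolding dl_def by (auto simp: sum.If_cases)
  finally show "fa_mult (dl u) (dl v) w = dl (u @ v) w" .
qed

abbreviation FA :: "'x set \<Rightarrow> ('x list \<Rightarrow> 'k::field) ring" where "FA X \<equiv> free_alg X"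

lemma FA_mult[simp]: "mult (free_alg X) = fa_mult"
  by (auto simp: free_alg_def fa_mult_def fun_eq_iff)
lemma FA_add[simp]: "add (free_alg X) = (+)"
  by (auto simp: free_alg_def fun_eq_iff)
lemma FA_one[simp]: "one (free_alg X) = fa_scalar 1"
  by (auto simp: free_alg_def fa_scalar_def fun_eq_iff)
lemma FA_zero[simp]: "zero (free_alg X) = 0"
  by (auto simp: free_alg_def fun_eq_iff)
lemma FA_carrier: "f \<in> carrier (free_alg X) \<longleftrightarrow> finite (supp f) \<and> (\<forall>w\<in>supp f. set w \<subseteq> X)"
  by (auto simp: free_alg_def supp_def)

lemma supp_add: "supp (f + g) \<subseteq> supp f \<union> supp (g :: 'a \<Rightarrow> 'k::comm_monoid_add)" by (auto simp: supp_def)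
lemma supp_neg[simp]: "supp (- f) = supp (f :: 'a \<Rightarrow> 'k::ab_group_add)" by (auto simp: supp_def)
lemma supp_sc: "supp (sc c f) \<subseteq> supp f" by (auto simp: supp_def sc_def)
lemma supp_mult: "supp (fa_mult f g) \<subseteq> (\<lambda>(u,v). u @ v) ` (supp f \<times> supp g)"
proof
  fix w assume "w \<in> supp (fa_mult f g)"
  then have "(\<Sum>k\<le>length w. f (take k w) * g (drop k w)) \<noteq> 0" by (simp add: supp_def fa_mult_def)
  then obtain k where "f (take k w) * g (drop k w) \<noteq> 0" by (meson sum.neutral)
  then show "w \<in> (\<lambda>(u,v). u @ v) ` (supp f \<times> supp g)"
    unfolding supp_def image_iff
    by (intro bexI[of _ "(take k w, drop k w)"]) auto
qed

lemma FA_add_closed: "f \<in> carrier (FA X) \<Longrightarrow> g \<in> carrier (FA X) \<Longrightarrow> f + g \<in> carrier (FA X)"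
  unfolding FA_carrier using supp_add[of f g] by (meson finite_Un finite_subset in_mono Un_iff)
lemma FA_neg_closed: "f \<in> carrier (FA X) \<Longrightarrow> - f \<in> carrier (FA X)"
  unfolding FA_carrier by simp
lemma FA_diff_closed: "f \<in> carrier (FA X) \<Longrightarrow> g \<in> carrier (FA X) \<Longrightarrow> f - g \<in> carrier (FA X)"
  unfolding diff_conv_add_uminus by (intro FA_add_closed FA_neg_closed)
lemma FA_zero_closed: "0 \<in> carrier (FA X)"
  unfolding FA_carrier by (simp add: supp_def)
lemma FA_sc_closed: "f \<in> carrier (FA X) \<Longrightarrow> sc c f \<in> carrier (FA X)"
  unfolding FA_carrier using supp_sc[of c f] by (meson finite_subset in_mono)
lemma FA_mult_closed: "f \<in> carrier (FA X) \<Longrightarrow> g \<in> carrier (FA X) \<Longrightarrow> fa_mult f g \<in> carrier (FA X)"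
  unfolding FA_carrier using supp_mult[of f g]
  by (auto intro: finite_subset) (fastforce)
lemma FA_scalar_closed: "fa_scalar c \<in> carrier (FA X)"
  unfolding FA_carrier by (auto simp: supp_def fa_scalar_def intro: finite_subset[of _ "{[]}"])
lemma FA_dl_closed: "set u \<subseteq> X \<Longrightarrow> dl u \<in> carrier (FA X)"
  unfolding FA_carrier by (auto simp: supp_def dl_def intro: finite_subset[of _ "{u}"])
lemma FA_gen_closed: "x \<in> X \<Longrightarrow> fa_gen x \<in> carrier (FA X)"
  unfolding FA_carrier by (auto simp: supp_def fa_gen_def intro: finite_subset[of _ "{[x]}"])
lemma FA_sum_closed: "(\<And>i. i \<in> I \<Longrightarrow> F i \<in> carrier (FA X)) \<Longrightarrow> (\<Sum>i\<in>I. F i) \<in> carrier (FA X)"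
  by (induction I rule: infinite_finite_induct) (auto simp: FA_zero_closed FA_add_closed)

lemma FA_ring: "ring (FA X)"
proof (rule ringI)
  show "abelian_group (FA X)"
    by (rule abelian_groupI) (auto simp: FA_add_closed FA_zero_closed add.assoc add.commute
        intro!: bexI[of _ "- _"] FA_neg_closed)
  show "monoid (FA X)"
    by (rule monoidI) (auto simp: FA_mult_closed FA_scalar_closed fa_mult_assoc)
qed (auto simp: fa_mult_add_left fa_mult_add_right)

lemma FA_a_inv: "f \<in> carrier (FA X) \<Longrightarrow> a_inv (FA X) f = - f"
  by (rule abelian_group.minus_equality[OF ring.is_abelian_group[OF FA_ring]])
     (auto simp: FA_neg_closed)
lemma FA_a_minus: "f \<in> carrier (FA X) \<Longrightarrow> g \<in> carrier (FA X) \<Longrightarrow> a_minus (FA X) f g = f - g"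
  by (simp add: a_minus_def FA_a_inv)

definition Mon :: "('x \<Rightarrow> ('y list \<Rightarrow> 'k::field)) \<Rightarrow> 'x list \<Rightarrow> ('y list \<Rightarrow> 'k)" where
  "Mon g w = foldr fa_mult (map g w) (fa_scalar 1)"

abbreviation fs :: "('x list \<Rightarrow> 'k::field) \<Rightarrow> bool" where "fs f \<equiv> finite (supp f)"

lemma Mon_Nil[simp]: "Mon g [] = fa_scalar 1" by (simp add: Mon_def)
lemma Mon_Cons[simp]: "Mon g (x # w) = fa_mult (g x) (Mon g w)" by (simp add: Mon_def)
lemma Mon_append: "Mon g (u @ v) = fa_mult (Mon g u) (Mon g v)"
  by (induction u) (auto simp: fa_mult_assoc)

lemma fs_add: "fs f \<Longrightarrow> fs g \<Longrightarrow> fs (f + g)"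
  using supp_add[of f g] by (meson finite_Un finite_subset)
lemma fs_neg: "fs f \<Longrightarrow> fs (- f)" by simp
lemma fs_diff: "fs f \<Longrightarrow> fs g \<Longrightarrow> fs (f - g)"
  unfolding diff_conv_add_uminus by (intro fs_add fs_neg)
lemma fs_sc: "fs f \<Longrightarrow> fs (sc c f)" using supp_sc by (metis finite_subset)
lemma fs_mult: "fs f \<Longrightarrow> fs g \<Longrightarrow> fs (fa_mult f g)"
  using supp_mult[of f g] by (meson finite_SigmaI finite_imageI finite_subset)
lemma fs_zero: "fs (0::'x list \<Rightarrow> 'k::field)" by (simp add: supp_def)
lemma fs_sum: "(\<And>i. i \<in> I \<Longrightarrow> fs (F i)) \<Longrightarrow> fs (\<Sum>i\<in>I. F i)"
  by (induction I rule: infinite_finite_induct) (auto simp: fs_zero fs_add)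
lemma fs_dl: "fs (dl u :: 'x list \<Rightarrow> 'k::field)"
  by (auto simp: supp_def dl_def intro: finite_subset[of _ "{u}"])
lemma fs_scalar: "fs (fa_scalar c :: 'x list \<Rightarrow> 'k::field)"
  by (auto simp: supp_def fa_scalar_def intro: finite_subset[of _ "{[]}"])
lemma fs_gen: "fs (fa_gen x :: 'x list \<Rightarrow> 'k::field)"
  by (auto simp: supp_def fa_gen_def intro: finite_subset[of _ "{[x]}"])
lemma fs_Mon: "(\<And>x. fs (g x)) \<Longrightarrow> fs (Mon g w)"
  by (induction w) (auto simp: fs_scalar fs_mult)

lemma sc_sc[simp]: "sc a (sc b f) = sc (a * b) f" by (simp add: sc_def mult.assoc)
lemma sc_0[simp]: "sc 0 f = 0" by (simp add: sc_def fun_eq_iff)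
lemma sc_f0[simp]: "sc c 0 = 0" by (simp add: sc_def fun_eq_iff)
lemma sc_1[simp]: "sc 1 f = f" by (simp add: sc_def fun_eq_iff)
lemma sc_add: "sc c (f + g) = sc c f + sc c g" by (simp add: sc_def fun_eq_iff distrib_left)
lemma sc_sum: "sc c (\<Sum>i\<in>I. F i) = (\<Sum>i\<in>I. sc c (F i))"
  by (simp add: sc_def fun_eq_iff sum_fun_apply sum_distrib_left)
lemma sc_scalar: "sc c (fa_scalar 1) = fa_scalar c" by (simp add: sc_def fa_scalar_def fun_eq_iff)

lemma expand: "finite S \<Longrightarrow> supp p \<subseteq> S \<Longrightarrow> p = (\<Sum>w\<in>S. sc (p w) (dl w))"
proof (rule ext)
  fix x assume S: "finite S" "supp p \<subseteq> S"
  have "(\<Sum>w\<in>S. sc (p w) (dl w)) x = (\<Sum>w\<in>S. if w = x then p x else 0)"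
    unfolding sum_fun_apply by (intro sum.cong refl) (auto simp: sc_def dl_def)
  also have "\<dots> = p x" using S by (auto simp: supp_def)
  finally show "p x = (\<Sum>w\<in>S. sc (p w) (dl w)) x" by simp
qed

lemma lift_eq: "finite S \<Longrightarrow> supp p \<subseteq> S \<Longrightarrow> fa_lift g p = (\<Sum>w\<in>S. sc (p w) (Mon g w))"
proof -
  assume S: "finite S" "supp p \<subseteq> S"
  have "fa_lift g p = (\<Sum>w\<in>supp p. sc (p w) (Mon g w))"
    by (simp add: fa_lift_def fun_eq_iff sum_fun_apply sc_def supp_def Mon_def)
  also have "\<dots> = (\<Sum>w\<in>S. sc (p w) (Mon g w))"
    using S by (intro sum.mono_neutral_left) (auto simp: supp_def)
  finally show ?thesis .
qed

lemma lift_add: "fs p \<Longrightarrow> fs q \<Longrightarrow> fa_lift g (p + q) = fa_lift g p + fa_lift g q"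
proof -
  assume "fs p" "fs q"
  then have S: "finite (supp p \<union> supp q)" by simp
  show ?thesis
    unfolding lift_eq[OF S supp_add] lift_eq[OF S Un_upper1] lift_eq[OF S Un_upper2]
    by (simp add: sum.distrib sc_def distrib_right fun_eq_iff sum_fun_apply)
qed

lemma lift_sc: "fs p \<Longrightarrow> fa_lift g (sc c p) = sc c (fa_lift g p)"
proof -
  assume S: "fs p"
  show ?thesis
    unfolding lift_eq[OF S supp_sc] lift_eq[OF S order_refl] sc_sum
    by (simp add: sc_def mult.assoc)
qed

lemma lift_zero[simp]: "fa_lift g 0 = 0"
  by (simp add: fa_lift_def supp_def fun_eq_iff)

lemma lift_sum: "(\<And>i. i \<in> I \<Longrightarrow> fs (F i)) \<Longrightarrow> fa_lift g (\<Sum>i\<in>I. F i) = (\<Sum>i\<in>I. fa_lift g (F i))"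
  by (induction I rule: infinite_finite_induct) (auto simp: lift_add fs_sum)

lemma lift_neg: "fs p \<Longrightarrow> fa_lift g (- p) = - fa_lift g p"
proof -
  assume "fs p"
  have "- p = sc (-1) p" by (simp add: sc_def fun_eq_iff)
  moreover have "- fa_lift g p = sc (-1) (fa_lift g p)" by (simp add: sc_def fun_eq_iff)
  ultimately show ?thesis using lift_sc[OF `fs p`] by simp
qed

lemma lift_diff: assumes "fs p" "fs q" shows "fa_lift g (p - q) = fa_lift g p - fa_lift g q"
  unfolding diff_conv_add_uminus lift_add[OF assms(1) fs_neg[OF assms(2)]] lift_neg[OF assms(2)] by (rule refl)

lemma lift_dl: "fa_lift g (dl w) = Mon g w"
  using lift_eq[of "{w}" "dl w" g] by (auto simp: supp_def dl_def)

lemma lift_scalar: "fa_lift g (fa_scalar c) = fa_scalar c"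
proof -
  have "fa_scalar c = sc c (dl [])" by (auto simp: sc_def dl_def fa_scalar_def fun_eq_iff)
  then show ?thesis using lift_sc[OF fs_dl, of g c "[]"] by (metis lift_dl sc_scalar Mon_Nil)
qed

lemma gen_dl: "fa_gen x = dl [x]" by (simp add: fa_gen_def dl_def)

lemma lift_gen: "fa_lift g (fa_gen x) = g x"
  by (simp add: gen_dl lift_dl)

lemma lift_mult: "fs p \<Longrightarrow> fs q \<Longrightarrow> fa_lift g (fa_mult p q) = fa_mult (fa_lift g p) (fa_lift g q)"
proof -
  assume P: "fs p" and Q: "fs q"
  have "fa_mult p q = fa_mult (\<Sum>u\<in>supp p. sc (p u) (dl u)) (\<Sum>v\<in>supp q. sc (q v) (dl v))"
    using expand[OF P order_refl] expand[OF Q order_refl] by metis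
  also have "\<dots> = (\<Sum>u\<in>supp p. \<Sum>v\<in>supp q. sc (p u * q v) (dl (u @ v)))"
    unfolding fa_mult_sum_left unfolding fa_mult_sum_right
    by (simp only: fa_mult_sc_left fa_mult_sc_right fa_mult_dl sc_sc mult.commute)
  finally have "fa_lift g (fa_mult p q) = (\<Sum>u\<in>supp p. \<Sum>v\<in>supp q. sc (p u * q v) (Mon g (u @ v)))"
    by (simp add: lift_sum fs_sum fs_sc fs_dl lift_sc lift_dl)
  also have "\<dots> = fa_mult (\<Sum>u\<in>supp p. sc (p u) (Mon g u)) (\<Sum>v\<in>supp q. sc (q v) (Mon g v))"
    unfolding fa_mult_sum_left unfolding fa_mult_sum_right
    by (simp only: fa_mult_sc_left fa_mult_sc_right Mon_append sc_sc mult.commute)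
  also have "\<dots> = fa_mult (fa_lift g p) (fa_lift g q)"
    using lift_eq[OF P order_refl] lift_eq[OF Q order_refl] by metis
  finally show ?thesis .
qed

lemma lift_Mon: "(\<And>x. fs (h x)) \<Longrightarrow> fa_lift g (Mon h w) = Mon (\<lambda>x. fa_lift g (h x)) w"
  by (induction w) (auto simp: lift_scalar lift_mult fs_Mon)

lemma lift_comp: "(\<And>x. fs (h x)) \<Longrightarrow> fs p \<Longrightarrow> fa_lift g (fa_lift h p) = fa_lift (\<lambda>x. fa_lift g (h x)) p"
proof -
  assume H: "\<And>x. fs (h x)" and P: "fs p"
  have "fa_lift g (fa_lift h p) = fa_lift g (\<Sum>w\<in>supp p. sc (p w) (Mon h w))"
    using lift_eq[OF P order_refl] by metis
  also have "\<dots> = (\<Sum>w\<in>supp p. sc (p w) (Mon (\<lambda>x. fa_lift g (h x)) w))"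
    by (simp add: lift_sum fs_sc fs_Mon H lift_sc lift_Mon)
  also have "\<dots> = fa_lift (\<lambda>x. fa_lift g (h x)) p"
    using lift_eq[OF P order_refl] by metis
  finally show ?thesis .
qed

lemma Mon_gen: "Mon fa_gen w = dl w"
  by (induction w) (auto simp: gen_dl fa_mult_dl, simp add: dl_def fa_scalar_def fun_eq_iff)

lemma lift_id: "fs p \<Longrightarrow> fa_lift fa_gen p = p"
  using lift_eq[of "supp p" p fa_gen] expand[of "supp p" p] by (simp add: Mon_gen)

lemma Mon_closed: "(\<And>x. x \<in> X \<Longrightarrow> g x \<in> carrier (FA Y)) \<Longrightarrow> set w \<subseteq> X \<Longrightarrow> Mon g w \<in> carrier (FA Y)"
  by (induction w) (auto simp: FA_scalar_closed FA_mult_closed)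

lemma lift_closed: "(\<And>x. x \<in> X \<Longrightarrow> g x \<in> carrier (FA Y)) \<Longrightarrow> p \<in> carrier (FA X) \<Longrightarrow> fa_lift g p \<in> carrier (FA Y)"
proof -
  assume g: "\<And>x. x \<in> X \<Longrightarrow> g x \<in> carrier (FA Y)" and p: "p \<in> carrier (FA X)"
  then have P: "fs p" "\<forall>w\<in>supp p. set w \<subseteq> X" using FA_carrier[of p X] by auto
  show ?thesis unfolding lift_eq[OF P(1) order_refl]
    using P g by (intro FA_sum_closed FA_sc_closed Mon_closed[of X g Y]) auto
qed

lemma FA_fs: "p \<in> carrier (FA X) \<Longrightarrow> fs p" by (simp add: FA_carrier)

lemma lift_hom: "(\<And>x. x \<in> X \<Longrightarrow> g x \<in> carrier (FA Y)) \<Longrightarrow> fa_lift g \<in> ring_hom (FA X) (FA Y)"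
  by (rule ring_hom_memI) (auto simp: lift_mult lift_add lift_scalar FA_fs intro: lift_closed)

lemma FI_carr: "ideal I (FA X) \<Longrightarrow> a \<in> I \<Longrightarrow> a \<in> carrier (FA X)"
  by (rule ideal.Icarr)
lemma FI_add: "ideal I (FA X) \<Longrightarrow> a \<in> I \<Longrightarrow> b \<in> I \<Longrightarrow> a + b \<in> I"
  using additive_subgroup.a_closed[OF ideal.axioms(1), of I "FA X" a b] by simp
lemma FI_neg: "ideal I (FA X) \<Longrightarrow> a \<in> I \<Longrightarrow> - a \<in> I"
  using additive_subgroup.a_inv_closed[OF ideal.axioms(1), of I "FA X" a] FA_a_inv[OF FI_carr, of I X a] by simp
lemma FI_diff: "ideal I (FA X) \<Longrightarrow> a \<in> I \<Longrightarrow> b \<in> I \<Longrightarrow> a - b \<in> I"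
  unfolding diff_conv_add_uminus by (intro FI_add FI_neg)
lemma FI_zero: "ideal I (FA X) \<Longrightarrow> 0 \<in> I"
  using additive_subgroup.zero_closed[OF ideal.axioms(1), of I "FA X"] by simp
lemma FI_lmult: "ideal I (FA X) \<Longrightarrow> x \<in> carrier (FA X) \<Longrightarrow> a \<in> I \<Longrightarrow> fa_mult x a \<in> I"
  using ideal.I_l_closed[of I "FA X" a x] by simp
lemma FI_rmult: "ideal I (FA X) \<Longrightarrow> x \<in> carrier (FA X) \<Longrightarrow> a \<in> I \<Longrightarrow> fa_mult a x \<in> I"
  using ideal.I_r_closed[of I "FA X" a x] by simp
lemma FI_sum: "ideal I (FA X) \<Longrightarrow> (\<And>i. i \<in> A \<Longrightarrow> F i \<in> I) \<Longrightarrow> (\<Sum>i\<in>A. F i) \<in> I"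
  by (induction A rule: infinite_finite_induct) (auto simp: FI_zero FI_add)

lemma fa_diff_eq: "fa_diff f g = f - g" by (simp add: fa_diff_def fun_eq_iff)

lemma sc_as_mult: "sc c f = fa_mult (fa_scalar c) f"
proof -
  have "fa_scalar c = sc c (fa_scalar 1)" by (simp add: sc_scalar)
  then show ?thesis by (metis fa_mult_one_left fa_mult_sc_left)
qed

lemma congr_gen:
  assumes I: "ideal I (FA (X :: 'x set))"
    and T: "\<And>x. x \<in> carrier (FA X) \<Longrightarrow> T x \<in> carrier (FA X)"
    and Tmult: "\<And>x y. x \<in> carrier (FA X) \<Longrightarrow> y \<in> carrier (FA X) \<Longrightarrow> T (fa_mult x y) = fa_mult (T x) (T y)"
    and Tsc: "\<And>x c. x \<in> carrier (FA X) \<Longrightarrow> T (sc c x) = sc c (T x)"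
    and Tsum: "\<And>(A :: 'x list set) F. finite A \<Longrightarrow> (\<And>i. i \<in> A \<Longrightarrow> F i \<in> carrier (FA X)) \<Longrightarrow> T (\<Sum>i\<in>A. F i) = (\<Sum>i\<in>A. T (F i))"
    and Tone: "T (fa_scalar 1) = fa_scalar 1"
    and Tgen: "\<And>x. x \<in> X \<Longrightarrow> fa_gen x - T (fa_gen x) \<in> I"
    and p: "p \<in> carrier (FA X)"
  shows "p - T p \<in> I"
proof -
  have dlw: "dl w - T (dl w) \<in> I" if "set w \<subseteq> X" for w
    using that
  proof (induction w)
    case Nil
    have "dl [] = fa_scalar 1" by (simp add: dl_def fa_scalar_def fun_eq_iff)
    then show ?case using Tone FI_zero[OF I] by (metis diff_self)
  next
    case (Cons x w)
    have dx: "dl (x # w) = fa_mult (fa_gen x) (dl w)" by (simp add: gen_dl fa_mult_dl)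
    have cx: "fa_gen x \<in> carrier (FA X)" "dl w \<in> carrier (FA X)"
      using Cons.prems by (auto intro: FA_gen_closed FA_dl_closed)
    have eq: "dl (x # w) - T (dl (x # w)) =
          fa_mult (fa_gen x - T (fa_gen x)) (dl w) + fa_mult (T (fa_gen x)) (dl w - T (dl w))"
      unfolding dx Tmult[OF cx] by (simp add: fa_mult_diff_left fa_mult_diff_right)
    have a: "fa_gen x - T (fa_gen x) \<in> I" by (rule Tgen) (use Cons.prems in simp)
    have b: "dl w - T (dl w) \<in> I" by (rule Cons.IH) (use Cons.prems in simp)
    show ?case unfolding eq by (rule FI_add[OF I FI_rmult[OF I cx(2) a] FI_lmult[OF I T[OF cx(1)] b]])
  qed
  have Pc: "finite (supp p)" "\<And>w. w \<in> supp p \<Longrightarrow> set w \<subseteq> X" using p unfolding FA_carrier by auto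
  have dlc: "\<And>w. w \<in> supp p \<Longrightarrow> sc (p w) (dl w) \<in> carrier (FA X)"
    using Pc by (auto intro: FA_sc_closed FA_dl_closed)
  have "p - T p = (\<Sum>w\<in>supp p. sc (p w) (dl w)) - T (\<Sum>w\<in>supp p. sc (p w) (dl w))"
    using expand[OF Pc(1) order_refl] by metis
  also have "T (\<Sum>w\<in>supp p. sc (p w) (dl w)) = (\<Sum>w\<in>supp p. T (sc (p w) (dl w)))"
    by (rule Tsum[of "supp p" "\<lambda>w. sc (p w) (dl w)", OF Pc(1) dlc])
  also have "(\<Sum>w\<in>supp p. T (sc (p w) (dl w))) = (\<Sum>w\<in>supp p. sc (p w) (T (dl w)))"
    by (rule sum.cong[OF refl], rule Tsc, rule FA_dl_closed, rule Pc(2))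
  also have "(\<Sum>w\<in>supp p. sc (p w) (dl w)) - (\<Sum>w\<in>supp p. sc (p w) (T (dl w)))
      = (\<Sum>w\<in>supp p. fa_mult (fa_scalar (p w)) (dl w - T (dl w)))"
    unfolding sum_subtractf[symmetric] sc_as_mult fa_mult_diff_right by (rule refl)
  also have "\<dots> \<in> I"
    using Pc dlw by (intro FI_sum[OF I] FI_lmult[OF I] FA_scalar_closed) auto
  finally show ?thesis .
qed

definition pathsum :: "('v \<times> 'v) list \<Rightarrow> (('v \<times> 'v) list \<Rightarrow> 'k::field)" where
  "pathsum p = sum_list (map fa_gen p)"

lemma is_path_Cons: "is_path E (e # q) \<longleftrightarrow> e \<in> E \<and> (q = [] \<or> (is_path E q \<and> snd e = fst (hd q)))"
proof
  assume a: "is_path E (e # q)"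
  show "e \<in> E \<and> (q = [] \<or> (is_path E q \<and> snd e = fst (hd q)))"
  proof (cases q)
    case (Cons a list)
    have "\<forall>j. Suc j < length q \<longrightarrow> snd (q ! j) = fst (q ! Suc j)"
    proof (intro allI impI)
      fix j assume "Suc j < length q"
      then show "snd (q ! j) = fst (q ! Suc j)" using a unfolding is_path_def
        by (metis Suc_less_eq length_Cons nth_Cons_Suc)
    qed
    then show ?thesis using a Cons unfolding is_path_def by (auto simp: nth_Cons)
  qed (use a in \<open>auto simp: is_path_def\<close>)
next
  assume a: "e \<in> E \<and> (q = [] \<or> (is_path E q \<and> snd e = fst (hd q)))"
  show "is_path E (e # q)"
  proof (cases "q = []")
    case True then show ?thesis using a by (simp add: is_path_def)
  next
    case False
    then have "is_path E q" "snd e = fst (hd q)" using a by auto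
    then show ?thesis using a False unfolding is_path_def
      by (auto simp: nth_Cons hd_conv_nth split: nat.splits)
  qed
qed

lemma lam0: "(\<lambda>w. 0::'k::zero) = 0" by (simp add: zero_fun_def)

lemma ecoef_high: "length p < i \<Longrightarrow> ecoef p i = 0"
  by (induction p arbitrary: i) (auto simp: fa_diff_eq lam0)

lemma ecoef_top: "ecoef p (length p) = fa_scalar 1"
  by (induction p) (auto simp: fa_diff_eq ecoef_high)

lemma ecoef_sub: "p \<noteq> [] \<Longrightarrow> ecoef p (length p - 1) = - pathsum p"
proof (induction p)
  case (Cons e q)
  show ?case
  proof (cases "q = []")
    case True then show ?thesis by (simp add: fa_diff_eq pathsum_def)
  next
    case False
    then have "length q \<noteq> 0" by simp
    then show ?thesis using Cons False
      by (simp add: fa_diff_eq pathsum_def ecoef_top fa_mult_neg_right fun_eq_iff)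
  qed
qed simp

lemma ecoef_closed: "set p \<subseteq> E \<Longrightarrow> ecoef p i \<in> carrier (FA E)"
  by (induction p arbitrary: i) (auto simp: fa_diff_eq FA_scalar_closed FA_zero_closed lam0
        intro!: FA_diff_closed FA_neg_closed FA_mult_closed FA_gen_closed)

lemma pathsum_closed: "set p \<subseteq> E \<Longrightarrow> pathsum p \<in> carrier (FA E)"
  by (induction p) (auto simp: pathsum_def FA_zero_closed intro!: FA_add_closed FA_gen_closed)

lemma fs_pathsum: "fs (pathsum p)"
proof (induction p)
  case Nil then show ?case unfolding pathsum_def by (simp only: list.map sum_list.Nil fs_zero)
next
  case (Cons a p) then show ?case unfolding pathsum_def list.map sum_list.Cons by (rule fs_add[OF fs_gen])
qed

lemma lift_pathsum: "fa_lift g (pathsum p) = sum_list (map g p)"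
proof (induction p)
  case Nil then show ?case unfolding pathsum_def list.map sum_list.Nil by (rule lift_zero)
next
  case (Cons a p) then show ?case
    unfolding pathsum_def list.map sum_list.Cons lift_add[OF fs_gen fs_pathsum[unfolded pathsum_def]] lift_gen
    by (simp only: pathsum_def)
qed

locale LG =
  fixes V :: "'v set" and E :: "('v \<times> 'v) set" and lvl :: "'v \<Rightarrow> nat" and s :: 'v
  assumes lg: "layered_graph V E lvl" and um: "unique_min V lvl s"
begin

lemma sV: "s \<in> V" and ls: "lvl s = 0" and lv0: "v \<in> V \<Longrightarrow> lvl v = 0 \<Longrightarrow> v = s"
  using um unfolding unique_min_def by auto

lemma edge: "(v, w) \<in> E \<Longrightarrow> v \<in> V \<and> w \<in> V \<and> lvl v \<ge> 1 \<and> lvl w = lvl v - 1"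
  using lg unfolding layered_graph_def by auto

lemma succ: "v \<in> V \<Longrightarrow> lvl v \<ge> 1 \<Longrightarrow> \<exists>w. (v, w) \<in> E"
  using lg unfolding layered_graph_def by auto

lemma path_len: "is_path E p \<Longrightarrow> lvl (fst (hd p)) = lvl (snd (last p)) + length p"
proof (induction p)
  case (Cons e q)
  then show ?case
  proof (cases "q = []")
    case True then show ?thesis using Cons edge[of "fst e" "snd e"] by (auto simp: is_path_Cons)
  next
    case False
    then have "is_path E q" "snd e = fst (hd q)" "e \<in> E" using Cons by (auto simp: is_path_Cons)
    moreover have "(fst e, snd e) \<in> E" using `e \<in> E` by simp
    ultimately show ?thesis using Cons False edge[OF \<open>(fst e, snd e) \<in> E\<close>] by auto
  qed
qed (simp add: is_path_def)

lemma path_exists: "v \<in> V \<Longrightarrow> lvl v = n \<Longrightarrow> n \<ge> 1 \<Longrightarrow> \<exists>p. is_path E p \<and> fst (hd p) = v \<and> snd (last p) = s"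
proof (induction n arbitrary: v)
  case 0 then show ?case by simp
next
  case (Suc n)
  obtain w where vw: "(v, w) \<in> E" using succ[of v] Suc.prems by auto
  have w: "w \<in> V" "lvl w = n" using edge[OF vw] Suc.prems by auto
  show ?case
  proof (cases "n = 0")
    case True
    then have "w = s" using w lv0 by auto
    then show ?thesis using vw by (intro exI[of _ "[(v,w)]"]) (auto simp: is_path_def)
  next
    case False
    then obtain q where q: "is_path E q" "fst (hd q) = w" "snd (last q) = s" using Suc.IH w by force
    then have "q \<noteq> []" by (auto simp: is_path_def)
    then show ?thesis using q vw by (intro exI[of _ "(v,w) # q"]) (auto simp: is_path_Cons)
  qed
qed

definition Pth :: "'v \<Rightarrow> ('v \<times> 'v) list" where
  "Pth v = (SOME p. is_path E p \<and> fst (hd p) = v \<and> snd (last p) = s)"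

lemma Pth: "v \<in> Vplus V lvl \<Longrightarrow> is_path E (Pth v) \<and> fst (hd (Pth v)) = v \<and> snd (last (Pth v)) = s"
  unfolding Pth_def Vplus_def by (rule someI_ex) (use path_exists in auto)

lemma Pth_len: "v \<in> Vplus V lvl \<Longrightarrow> length (Pth v) = lvl v"
  using Pth[of v] path_len[of "Pth v"] ls by auto

definition phi :: "(('v \<times> 'v) list \<Rightarrow> 'k::field) \<Rightarrow> ('v list \<Rightarrow> 'k)" where
  "phi = fa_lift (phi2_gen s)"
definition psi :: "('v list \<Rightarrow> 'k::field) \<Rightarrow> (('v \<times> 'v) list \<Rightarrow> 'k)" where
  "psi = fa_lift (\<lambda>v. pathsum (Pth v))"

lemma phi2_closed: "e \<in> E \<Longrightarrow> phi2_gen s e \<in> carrier (FA (Vplus V lvl))"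
proof -
  assume e: "e \<in> E"
  obtain v w where vw: "e = (v, w)" by force
  have "v \<in> Vplus V lvl" using edge[of v w] e vw by (auto simp: Vplus_def)
  moreover have "w \<noteq> s \<Longrightarrow> w \<in> Vplus V lvl" using edge[of v w] e vw lv0[of w] by (auto simp: Vplus_def; arith)
  ultimately show ?thesis unfolding phi2_gen_def vw fa_diff_eq
    by (auto intro!: FA_gen_closed FA_diff_closed)
qed

lemma fs_phi2: "fs (phi2_gen s e)"
  by (auto simp: phi2_gen_def fa_diff_eq intro!: fs_gen fs_diff)

lemma phi_hom: "phi \<in> ring_hom (FA E) (FA (Vplus V lvl))"
  unfolding phi_def by (rule lift_hom) (rule phi2_closed)

lemma psi_hom: "psi \<in> ring_hom (FA (Vplus V lvl)) (FA E)"
  unfolding psi_def by (rule lift_hom) (use Pth in \<open>auto simp: is_path_def intro!: pathsum_closed\<close>)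

lemma telescope: "is_path E p \<Longrightarrow> snd (last p) = s \<Longrightarrow> sum_list (map (phi2_gen s) p) = fa_gen (fst (hd p))"
proof (induction p)
  case (Cons e q)
  show ?case
  proof (cases "q = []")
    case True then show ?thesis using Cons by (simp add: phi2_gen_def)
  next
    case False
    then have q: "is_path E q" "snd e = fst (hd q)" using Cons by (auto simp: is_path_Cons)
    then obtain u where "(fst (hd q), u) \<in> E" using False unfolding is_path_def
      by (metis hd_in_set prod.collapse subsetD)
    then have "snd e \<noteq> s" using edge q ls by fastforce
    then show ?thesis using Cons q False by (simp add: phi2_gen_def fa_diff_eq)
  qed
qed (simp add: is_path_def)

lemma phi_psi_gen: "v \<in> Vplus V lvl \<Longrightarrow> phi (pathsum (Pth v)) = fa_gen v"
  unfolding phi_def lift_pathsum using Pth[of v] telescope[of "Pth v"] by metis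

lemma lift_cong: "(\<And>x. x \<in> X \<Longrightarrow> g x = h x) \<Longrightarrow> p \<in> carrier (FA X) \<Longrightarrow> fa_lift g p = fa_lift h p"
proof -
  assume gh: "\<And>x. x \<in> X \<Longrightarrow> g x = h x" and p: "p \<in> carrier (FA X)"
  have mc: "\<And>w. set w \<subseteq> X \<Longrightarrow> Mon g w = Mon h w"
  proof -
    fix w show "set w \<subseteq> X \<Longrightarrow> Mon g w = Mon h w" by (induction w) (auto simp: gh)
  qed
  have P: "fs p" "\<And>w. w \<in> supp p \<Longrightarrow> set w \<subseteq> X" using p unfolding FA_carrier by auto
  show ?thesis unfolding lift_eq[OF P(1) order_refl] using mc P(2) by (intro sum.cong refl) auto
qed

lemma phi_psi: "x \<in> carrier (FA (Vplus V lvl)) \<Longrightarrow> phi (psi x) = x"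
proof -
  assume x: "x \<in> carrier (FA (Vplus V lvl))"
  have "phi (psi x) = fa_lift (\<lambda>v. phi (pathsum (Pth v))) x"
    unfolding phi_def psi_def by (rule lift_comp) (auto simp: fs_pathsum FA_fs[OF x])
  also have "\<dots> = fa_lift fa_gen x" using x by (intro lift_cong[of "Vplus V lvl"]) (auto simp: phi_psi_gen)
  also have "\<dots> = x" using x by (simp add: lift_id FA_fs)
  finally show ?thesis .
qed

end

context LG begin

abbreviation "Vp \<equiv> Vplus V lvl"

lemma FA_ring_E: "ring (FA E :: (('v \<times> 'v) list \<Rightarrow> 'k::field) ring)" by (rule FA_ring)

lemma gensE_closed: "{fa_diff (ecoef p i) (ecoef q i) | p q i. is_path E p \<and> is_path E q \<and> path_equiv p q \<and> i \<le> length p}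
   \<subseteq> carrier (FA E :: (('v \<times> 'v) list \<Rightarrow> 'k::field) ring)"
  by (auto simp: fa_diff_eq is_path_def intro!: FA_diff_closed ecoef_closed)

lemma RE_ideal: "ideal (R_E E :: (('v \<times> 'v) list \<Rightarrow> 'k::field) set) (FA E)"
  unfolding R_E_def by (rule ring.genideal_ideal[OF FA_ring gensE_closed])

lemma genE_in: "is_path E p \<Longrightarrow> is_path E q \<Longrightarrow> path_equiv p q \<Longrightarrow> i \<le> length p \<Longrightarrow>
   (ecoef p i - ecoef q i :: ('v \<times> 'v) list \<Rightarrow> 'k::field) \<in> R_E E"
  using ring.genideal_self[OF FA_ring gensE_closed] unfolding R_E_def fa_diff_eq[symmetric] by blast

lemma etilde_eq: "etilde s p i = phi (ecoef p i)" by (simp add: etilde_def phi_def)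

lemma gensV_closed: "{fa_diff (etilde s p i) (etilde s q i) | p q i. is_path E p \<and> is_path E q \<and> path_equiv p q \<and> i \<le> length p}
   \<subseteq> carrier (FA Vp :: ('v list \<Rightarrow> 'k::field) ring)"
  using phi_hom ecoef_closed
  by (auto simp: fa_diff_eq etilde_eq is_path_def intro!: FA_diff_closed ring_hom_closed[OF phi_hom])

lemma RV_ideal: "ideal (R_V V E lvl s :: ('v list \<Rightarrow> 'k::field) set) (FA Vp)"
  unfolding R_V_def by (rule ring.genideal_ideal[OF FA_ring gensV_closed])

lemma genV_in: "is_path E p \<Longrightarrow> is_path E q \<Longrightarrow> path_equiv p q \<Longrightarrow> i \<le> length p \<Longrightarrow>
   (phi (ecoef p i) - phi (ecoef q i) :: 'v list \<Rightarrow> 'k::field) \<in> R_V V E lvl s"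
  using ring.genideal_self[OF FA_ring gensV_closed] unfolding R_V_def fa_diff_eq[symmetric] etilde_eq by blast

lemma gen_cong: "e \<in> E \<Longrightarrow> (fa_gen e - psi (phi (fa_gen e)) :: ('v \<times> 'v) list \<Rightarrow> 'k::field) \<in> R_E E"
proof -
  assume e: "e \<in> E"
  obtain v w where vw: "e = (v, w)" by force
  have ed: "v \<in> V" "w \<in> V" "lvl v \<ge> 1" "lvl w = lvl v - 1" using edge e vw by auto
  have vp: "v \<in> Vp" using ed by (auto simp: Vplus_def)
  have phig: "phi (fa_gen e) = phi2_gen s e" by (simp add: phi_def lift_gen)
  have psig: "\<And>x. psi (fa_gen x) = (pathsum (Pth x) :: ('v \<times> 'v) list \<Rightarrow> 'k)" by (simp add: psi_def lift_gen)
  show ?thesis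
  proof (cases "w = s")
    case True
    have lv: "lvl v = 1" using ed True ls by auto
    have P: "is_path E (Pth v)" "fst (hd (Pth v)) = v" "snd (last (Pth v)) = s" "length (Pth v) = 1"
      using Pth[OF vp] Pth_len[OF vp] lv by auto
    have pe1: "is_path E [e]" using e by (simp add: is_path_def)
    have pe2: "path_equiv (Pth v) [e]" using P vw True by (simp add: path_equiv_def)
    have g1: "ecoef (Pth v) 0 - ecoef [e] 0 \<in> (R_E E :: (('v \<times> 'v) list \<Rightarrow> 'k) set)"
      by (rule genE_in[OF P(1) pe1 pe2]) (use P in simp)
    have c1: "ecoef (Pth v) 0 = (- pathsum (Pth v) :: ('v \<times> 'v) list \<Rightarrow> 'k)"
      using ecoef_sub[of "Pth v"] P by (auto simp: is_path_def)
    have c2: "ecoef [e] 0 = (- fa_gen e :: ('v \<times> 'v) list \<Rightarrow> 'k)"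
      by (simp add: fa_diff_eq lam0)
    have c3: "psi (phi (fa_gen e)) = (pathsum (Pth v) :: ('v \<times> 'v) list \<Rightarrow> 'k)"
      unfolding phig using True vw by (simp add: psig phi2_gen_def)
    have "fa_gen e - psi (phi (fa_gen e)) = ecoef (Pth v) 0 - (ecoef [e] 0 :: ('v \<times> 'v) list \<Rightarrow> 'k)"
      unfolding c1 c2 c3 by (simp add: algebra_simps)
    then show ?thesis using g1 by simp
  next
    case False
    have wp: "w \<in> Vp" using ed False lv0[of w] by (auto simp: Vplus_def; arith)
    have P: "is_path E (Pth v)" "fst (hd (Pth v)) = v" "snd (last (Pth v)) = s" "length (Pth v) = lvl v"
      using Pth[OF vp] Pth_len[OF vp] by auto
    have Q: "is_path E (Pth w)" "fst (hd (Pth w)) = w" "snd (last (Pth w)) = s" "length (Pth w) = lvl w"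
      using Pth[OF wp] Pth_len[OF wp] by auto
    have Qn: "Pth w \<noteq> []" using Q by (auto simp: is_path_def)
    have "is_path E (e # Pth w)" using e vw Q Qn by (simp add: is_path_Cons)
    moreover have "path_equiv (Pth v) (e # Pth w)" using P Q Qn vw ed by (auto simp: path_equiv_def)
    moreover have len: "length (e # Pth w) = length (Pth v)" using P Q ed by simp
    ultimately have g1: "ecoef (Pth v) (length (Pth v) - 1) - ecoef (e # Pth w) (length (Pth v) - 1)
       \<in> (R_E E :: (('v \<times> 'v) list \<Rightarrow> 'k) set)"
      using P(1) by (intro genE_in) auto
    have c1: "ecoef (Pth v) (length (Pth v) - 1) = (- pathsum (Pth v) :: ('v \<times> 'v) list \<Rightarrow> 'k)"
      using ecoef_sub[of "Pth v"] P by (auto simp: is_path_def)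
    have ne: "e # Pth w \<noteq> []" by simp
    have c2: "ecoef (e # Pth w) (length (Pth v) - 1) = (- pathsum (e # Pth w) :: ('v \<times> 'v) list \<Rightarrow> 'k)"
      using ecoef_sub[OF ne] unfolding len .
    have c3: "psi (phi (fa_gen e)) = (pathsum (Pth v) - pathsum (Pth w) :: ('v \<times> 'v) list \<Rightarrow> 'k)"
      unfolding phig using False vw by (simp add: phi2_gen_def fa_diff_eq psi_def lift_diff fs_gen lift_gen)
    have ps: "pathsum (e # Pth w) = (fa_gen e + pathsum (Pth w) :: ('v \<times> 'v) list \<Rightarrow> 'k)"
      by (simp only: pathsum_def list.map sum_list.Cons)
    have "fa_gen e - psi (phi (fa_gen e)) = ecoef (Pth v) (length (Pth v) - 1) - (ecoef (e # Pth w) (length (Pth v) - 1) :: ('v \<times> 'v) list \<Rightarrow> 'k)"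
      unfolding c1 c2 c3 ps by (simp add: algebra_simps)
    then show ?thesis using g1 by simp
  qed
qed

end

context LG begin

lemma phi_closed: "x \<in> carrier (FA E) \<Longrightarrow> (phi x :: 'v list \<Rightarrow> 'k::field) \<in> carrier (FA Vp)"
  by (rule ring_hom_closed[OF phi_hom])
lemma psi_closed: "x \<in> carrier (FA Vp) \<Longrightarrow> (psi x :: ('v \<times> 'v) list \<Rightarrow> 'k::field) \<in> carrier (FA E)"
  by (rule ring_hom_closed[OF psi_hom])

lemma T_mult: "x \<in> carrier (FA E) \<Longrightarrow> y \<in> carrier (FA E) \<Longrightarrow>
      psi (phi (fa_mult x y)) = fa_mult (psi (phi x)) (psi (phi (y :: ('v \<times> 'v) list \<Rightarrow> 'k::field)))"
proof -
  assume xy: "x \<in> carrier (FA E)" "y \<in> carrier (FA E)"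
  have "phi (fa_mult x y) = fa_mult (phi x) (phi y)"
    unfolding phi_def by (rule lift_mult) (use xy in \<open>simp add: FA_fs\<close>)+
  moreover have "psi (fa_mult (phi x) (phi y)) = fa_mult (psi (phi x)) (psi (phi y))"
    unfolding psi_def by (rule lift_mult) (use xy in \<open>simp add: FA_fs[OF phi_closed]\<close>)+
  ultimately show ?thesis by simp
qed

lemma T_sc: "x \<in> carrier (FA E) \<Longrightarrow> psi (phi (sc c x)) = sc c (psi (phi (x :: ('v \<times> 'v) list \<Rightarrow> 'k::field)))"
proof -
  assume x: "x \<in> carrier (FA E)"
  have "phi (sc c x) = sc c (phi x)" unfolding phi_def by (rule lift_sc) (use x in \<open>simp add: FA_fs\<close>)
  moreover have "psi (sc c (phi x)) = sc c (psi (phi x))" unfolding psi_def by (rule lift_sc) (use x in \<open>simp add: FA_fs[OF phi_closed]\<close>)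
  ultimately show ?thesis by simp
qed

lemma T_sum: "(\<And>i. i \<in> A \<Longrightarrow> F i \<in> carrier (FA E)) \<Longrightarrow>
      psi (phi (sum F A)) = (\<Sum>i\<in>A. psi (phi (F i :: ('v \<times> 'v) list \<Rightarrow> 'k::field)))"
proof -
  assume F: "\<And>i. i \<in> A \<Longrightarrow> F i \<in> carrier (FA E)"
  have "phi (sum F A) = (\<Sum>i\<in>A. phi (F i))" unfolding phi_def by (rule lift_sum) (rule FA_fs[OF F])
  moreover have "psi (\<Sum>i\<in>A. phi (F i)) = (\<Sum>i\<in>A. psi (phi (F i)))" unfolding psi_def by (rule lift_sum) (rule FA_fs[OF phi_closed[OF F]])
  ultimately show ?thesis by simp
qed

lemma cong_all: "x \<in> carrier (FA E) \<Longrightarrow> (x - psi (phi x) :: ('v \<times> 'v) list \<Rightarrow> 'k::field) \<in> R_E E"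
proof (rule congr_gen[OF RE_ideal, where T = "\<lambda>x. psi (phi x)"])
  show "\<And>x. x \<in> carrier (FA E) \<Longrightarrow> psi (phi x) \<in> carrier (FA E)" by (simp add: phi_closed psi_closed)
  show "\<And>x y. x \<in> carrier (FA E) \<Longrightarrow> y \<in> carrier (FA E) \<Longrightarrow>
      psi (phi (fa_mult x y)) = fa_mult (psi (phi x)) (psi (phi y))" by (rule T_mult)
  show "\<And>x c. x \<in> carrier (FA E) \<Longrightarrow> psi (phi (sc c x)) = sc c (psi (phi x))" by (rule T_sc)
  show "\<And>A F. finite A \<Longrightarrow> (\<And>i. i \<in> A \<Longrightarrow> F i \<in> carrier (FA E)) \<Longrightarrow>
      psi (phi (sum F A)) = (\<Sum>i\<in>A. psi (phi (F i)))" by (rule T_sum)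
  show "psi (phi (fa_scalar 1)) = fa_scalar 1" by (simp add: phi_def psi_def lift_scalar)
  show "\<And>x. x \<in> E \<Longrightarrow> fa_gen x - psi (phi (fa_gen x)) \<in> R_E E" by (rule gen_cong)
qed

lemma rcos_zero_iff: "ideal I (FA X) \<Longrightarrow> y \<in> carrier (FA X) \<Longrightarrow> (I +>\<^bsub>FA X\<^esub> y = I) \<longleftrightarrow> y \<in> I"
  using ring.a_rcos_zero[OF FA_ring] ideal.rcos_const_imp_mem by metis

theorem main:
  shows "\<exists>h. h \<in> ring_iso (labeling_alg E :: (('v \<times> 'v) list \<Rightarrow> 'k::field) set ring)
                            (free_alg (Vplus V lvl) Quot (R_V V E lvl s :: ('v list \<Rightarrow> 'k) set)) \<and>
             (\<forall>c::'k. h (R_E E +>\<^bsub>free_alg E\<^esub> fa_scalar c)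
                      = R_V V E lvl s +>\<^bsub>free_alg (Vplus V lvl)\<^esub> fa_scalar c)"
proof -
  define RE where "RE = (R_E E :: (('v \<times> 'v) list \<Rightarrow> 'k) set)"
  define RV where "RV = (R_V V E lvl s :: ('v list \<Rightarrow> 'k) set)"
  define Q where "Q = (FA Vp Quot RV :: ('v list \<Rightarrow> 'k) set ring)"
  define f where "f = (\<lambda>x. RV +>\<^bsub>FA Vp\<^esub> (phi x :: 'v list \<Rightarrow> 'k))"
  have REi: "ideal RE (FA E)" unfolding RE_def by (rule RE_ideal)
  have RVi: "ideal RV (FA Vp)" unfolding RV_def by (rule RV_ideal)
  have Qr: "ring Q" unfolding Q_def by (rule ideal.quotient_is_ring[OF RVi])
  have fh: "f \<in> ring_hom (FA E) Q"
    using ring_hom_trans[OF phi_hom ideal.rcos_ring_hom[OF RVi]] unfolding f_def Q_def o_def .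
  interpret hr: ring_hom_ring "FA E" Q f by (rule ring_hom_ringI2[OF FA_ring Qr fh])
  have fz: "\<And>x. x \<in> carrier (FA E) \<Longrightarrow> f x = \<zero>\<^bsub>Q\<^esub> \<longleftrightarrow> phi x \<in> RV"
    unfolding f_def Q_def by (simp add: FactRing_def rcos_zero_iff[OF RVi] phi_closed)
  have surj: "f ` carrier (FA E) = carrier Q"
  proof
    show "f ` carrier (FA E) \<subseteq> carrier Q" using fh by (auto intro: ring_hom_closed)
    show "carrier Q \<subseteq> f ` carrier (FA E)"
    proof
      fix X assume "X \<in> carrier Q"
      then obtain a where a: "a \<in> carrier (FA Vp)" "X = RV +>\<^bsub>FA Vp\<^esub> a"
        unfolding Q_def FactRing_def A_RCOSETS_def' by auto
      then have "X = f (psi a)" unfolding f_def by (simp add: phi_psi)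
      then show "X \<in> f ` carrier (FA E)" using a psi_closed by blast
    qed
  qed
  have psiRV: "psi y \<in> RE" if y: "y \<in> RV" for y
  proof -
    define g where "g = (\<lambda>y. RE +>\<^bsub>FA E\<^esub> (psi y :: ('v \<times> 'v) list \<Rightarrow> 'k))"
    have gh: "g \<in> ring_hom (FA Vp) (FA E Quot RE)"
      using ring_hom_trans[OF psi_hom ideal.rcos_ring_hom[OF REi]] unfolding g_def o_def .
    interpret gr: ring_hom_ring "FA Vp" "FA E Quot RE" g
      by (rule ring_hom_ringI2[OF FA_ring ideal.quotient_is_ring[OF REi] gh])
    have "RV \<subseteq> a_kernel (FA Vp) (FA E Quot RE) g"
      unfolding RV_def R_V_def
    proof (rule ring.genideal_minimal[OF FA_ring gr.kernel_is_ideal])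
      show "{fa_diff (etilde s p i) (etilde s q i) |p q i. is_path E p \<and> is_path E q \<and> path_equiv p q \<and> i \<le> length p}
          \<subseteq> a_kernel (FA Vp) (FA E Quot RE) g"
      proof
        fix z :: "'v list \<Rightarrow> 'k" assume "z \<in> {fa_diff (etilde s p i) (etilde s q i) |p q i. is_path E p \<and> is_path E q \<and> path_equiv p q \<and> i \<le> length p}"
        then obtain p q i where pq: "is_path E p" "is_path E q" "path_equiv p q" "i \<le> length p"
          and z: "z = fa_diff (etilde s p i) (etilde s q i)" by blast
        define d where "d = (ecoef p i - ecoef q i :: ('v \<times> 'v) list \<Rightarrow> 'k)"
        have dc: "d \<in> carrier (FA E)" using pq unfolding d_def
          by (auto simp: is_path_def intro!: FA_diff_closed ecoef_closed)
        have ep: "set p \<subseteq> E" "set q \<subseteq> E" using pq by (auto simp: is_path_def)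
        have zd: "z = phi d" unfolding z d_def fa_diff_eq etilde_eq phi_def
          by (rule lift_diff[OF FA_fs[OF ecoef_closed[OF ep(1)]] FA_fs[OF ecoef_closed[OF ep(2)]], symmetric])
        have dRE: "d \<in> RE" unfolding d_def RE_def using genE_in pq by blast
        have "psi z = d - (d - psi (phi d))" using zd by simp
        also have "\<dots> \<in> RE" by (rule FI_diff[OF REi dRE cong_all[OF dc, folded RE_def]])
        finally have "psi z \<in> RE" .
        moreover have zc: "z \<in> carrier (FA Vp)" using zd dc phi_closed by simp
        ultimately show "z \<in> a_kernel (FA Vp) (FA E Quot RE) g"
          unfolding a_kernel_def' g_def by (simp add: FactRing_def rcos_zero_iff[OF REi] psi_closed)
      qed
    qed
    then have "g y = RE" "y \<in> carrier (FA Vp)" using y unfolding a_kernel_def' by (auto simp: FactRing_def)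
    then show ?thesis unfolding g_def by (simp add: rcos_zero_iff[OF REi] psi_closed)
  qed
  have ker: "a_kernel (FA E) Q f = RE"
  proof
    show "RE \<subseteq> a_kernel (FA E) Q f"
      unfolding RE_def R_E_def
    proof (rule ring.genideal_minimal[OF FA_ring hr.kernel_is_ideal])
      show "{fa_diff (ecoef p i) (ecoef q i) |p q i. is_path E p \<and> is_path E q \<and> path_equiv p q \<and> i \<le> length p}
          \<subseteq> a_kernel (FA E) Q f"
      proof
        fix z :: "('v \<times> 'v) list \<Rightarrow> 'k" assume "z \<in> {fa_diff (ecoef p i) (ecoef q i) |p q i. is_path E p \<and> is_path E q \<and> path_equiv p q \<and> i \<le> length p}"
        then obtain p q i where pq: "is_path E p" "is_path E q" "path_equiv p q" "i \<le> length p"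
          and z: "z = fa_diff (ecoef p i) (ecoef q i)" by blast
        have zc: "z \<in> carrier (FA E)" using pq unfolding z fa_diff_eq
          by (auto simp: is_path_def intro!: FA_diff_closed ecoef_closed)
        have ep: "set p \<subseteq> E" "set q \<subseteq> E" using pq by (auto simp: is_path_def)
        have "phi z = phi (ecoef p i) - phi (ecoef q i)"
          unfolding z fa_diff_eq phi_def
          by (rule lift_diff[OF FA_fs[OF ecoef_closed[OF ep(1)]] FA_fs[OF ecoef_closed[OF ep(2)]]])
        then have "phi z \<in> RV" unfolding RV_def using genV_in pq by simp
        then show "z \<in> a_kernel (FA E) Q f" using zc fz unfolding a_kernel_def' by simp
      qed
    qed
    show "a_kernel (FA E) Q f \<subseteq> RE"
    proof
      fix x assume "x \<in> a_kernel (FA E) Q f"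
      then have x: "x \<in> carrier (FA E)" "phi x \<in> RV" using fz unfolding a_kernel_def' by auto
      have "x = (x - psi (phi x)) + psi (phi x)" by simp
      also have "\<dots> \<in> RE" using cong_all[OF x(1)] psiRV[OF x(2)] unfolding RE_def
        by (intro FI_add[OF RE_ideal])
      finally show "x \<in> RE" .
    qed
  qed
  have iso: "(\<lambda>X. the_elem (f ` X)) \<in> ring_iso (FA E Quot RE) Q"
    using hr.FactRing_iso_set[OF surj] unfolding ker .
  show ?thesis
  proof (intro exI conjI allI)
    show "(\<lambda>X. the_elem (f ` X)) \<in> ring_iso (labeling_alg E) (free_alg Vp Quot R_V V E lvl s)"
      using iso unfolding labeling_alg_def Q_def RE_def RV_def .
    fix c :: 'k
    have "the_elem (f ` (R_E E +>\<^bsub>FA E\<^esub> fa_scalar c)) = f (fa_scalar c)"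
      using hr.the_elem_simp[of "fa_scalar c"] ker unfolding RE_def by (simp add: FA_scalar_closed)
    also have "\<dots> = R_V V E lvl s +>\<^bsub>FA Vp\<^esub> fa_scalar c"
      unfolding f_def RV_def by (simp add: phi_def lift_scalar)
    finally show "the_elem (f ` (R_E E +>\<^bsub>FA E\<^esub> fa_scalar c)) = R_V V E lvl s +>\<^bsub>FA Vp\<^esub> fa_scalar c" .
  qed
qed

end

theorem mainTheorem2:
  fixes V :: "'v set" and E :: "('v \<times> 'v) set" and lvl :: "'v \<Rightarrow> nat" and s :: 'v
  assumes "layered_graph V E lvl" and "unique_min V lvl s"
  shows "\<exists>h. h \<in> ring_iso (labeling_alg E :: (('v \<times> 'v) list \<Rightarrow> 'k::field) set ring)
                            (free_alg (Vplus V lvl) Quot (R_V V E lvl s :: ('v list \<Rightarrow> 'k) set)) \<and>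
             (\<forall>c::'k. h (R_E E +>\<^bsub>free_alg E\<^esub> fa_scalar c)
                      = R_V V E lvl s +>\<^bsub>free_alg (Vplus V lvl)\<^esub> fa_scalar c)"
proof -
  interpret LG V E lvl s using assms by (rule LG.intro)
  show ?thesis by (rule main)
qed

end
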